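(* Let $\Omega$ be a countably infinite set and $G$ a subgroup of $S=\mathrm{Sym}(\Omega)$. Suppose there exist a sequence $(\alpha_i)_{i\in\omega}$ of distinct elements of $\Omega$ and nonempty subsets $D_i\subseteq\Omega^i$ ($i\in\omega$) such that: (i) for each $i$ and each $(\beta_0,\ldots,\beta_i)\in D_{i+1}$, we have $(\beta_0,\ldots,\beta_{i-1})\in D_i$; (ii) for each $i$ and each $(\beta_0,\ldots,\beta_{i-1})\in D_i$, there exist infinitely many $\beta\in\Omega$ with $(\beta_0,\ldots,\beta_{i-1},\beta)\in D_{i+1}$; (iii) whenever $(\beta_i)_{i\in\omega}\in\Omega^\omega$ satisfies $(\beta_0,\ldots,\beta_{i-1})\in D_i$ for every $i$, there exists $g\in G$ with $\beta_i=\alpha_ig$ for all $i$. Then $G\approx S$.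
   Context: $\mathrm{Sym}(\Omega)$ is the group of all permutations of $\Omega$, acting on the right. For subgroups $G_1,G_2\le S$: $G_1\preccurlyeq G_2$ means there is a finite $U\subseteq S$ with $G_1\le\langle G_2\cup U\rangle$, and $G_1\approx G_2$ means $G_1\preccurlyeq G_2$ and $G_2\preccurlyeq G_1$. *)

theory Defs
  imports "HOL-Algebra.Bij" "HOL-Algebra.Generated_Groups" "HOL-Library.Countable_Set"
begin

text \<open>Sym(Omega), with Omega the universe of the type 'a, as the HOL-Algebra group of
bijections of UNIV (carrier = all bijections).\<close>

abbreviation SymG :: "('a \<Rightarrow> 'a) monoid" where
  "SymG \<equiv> BijGroup (UNIV :: 'a set)"

definition sym_preceq :: "('a \<Rightarrow> 'a) set \<Rightarrow> ('a \<Rightarrow> 'a) set \<Rightarrow> bool" where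
  "sym_preceq G1 G2 \<longleftrightarrow>
     (\<exists>U. finite U \<and> U \<subseteq> carrier SymG \<and> G1 \<subseteq> generate SymG (G2 \<union> U))"

definition sym_approx :: "('a \<Rightarrow> 'a) set \<Rightarrow> ('a \<Rightarrow> 'a) set \<Rightarrow> bool" where
  "sym_approx G1 G2 \<longleftrightarrow> sym_preceq G1 G2 \<and> sym_preceq G2 G1"

end

theory Submission
  imports Defs "HOL-Library.Ramsey" "HOL-Library.Nat_Bijection"
begin

abbreviation finv :: "('a \<Rightarrow> 'b) \<Rightarrow> 'b \<Rightarrow> 'a" where "finv f \<equiv> inv_into UNIV f"

definition pgrp :: "('a \<Rightarrow> 'a) set \<Rightarrow> bool" where
  "pgrp K \<longleftrightarrow> (\<forall>f\<in>K. bij f) \<and> id \<in> K \<and> (\<forall>f\<in>K. \<forall>g\<in>K. f \<circ> g \<in> K) \<and> (\<forall>f\<in>K. finv f \<in> K)"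

lemma pgrpD:
  assumes "pgrp K"
  shows "f \<in> K \<Longrightarrow> bij f" "id \<in> K" "f \<in> K \<Longrightarrow> g \<in> K \<Longrightarrow> f \<circ> g \<in> K" "f \<in> K \<Longrightarrow> finv f \<in> K"
  using assms unfolding pgrp_def by auto

lemma carrier_SymG: "carrier SymG = {f. bij f}"
  by (auto simp: BijGroup_def Bij_def extensional_def)

lemma mult_SymG: "bij f \<Longrightarrow> bij g \<Longrightarrow> f \<otimes>\<^bsub>SymG\<^esub> g = f \<circ> g"
  by (auto simp: BijGroup_def Bij_def extensional_def compose_def)

lemma inv_SymG: "bij f \<Longrightarrow> inv\<^bsub>SymG\<^esub> f = finv f"
proof -
  assume "bij f"
  hence "f \<in> Bij UNIV" by (auto simp: Bij_def extensional_def)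
  thus ?thesis by (simp add: inv_BijGroup restrict_def)
qed

lemma one_SymG: "\<one>\<^bsub>SymG\<^esub> = id"
  by (auto simp: BijGroup_def)

lemma pgrp_generate:
  assumes "X \<subseteq> {f. bij f}"
  shows "pgrp (generate SymG X)"
proof -
  interpret group SymG by (rule group_BijGroup)
  have X: "X \<subseteq> carrier SymG" using assms carrier_SymG by auto
  have b: "f \<in> generate SymG X \<Longrightarrow> bij f" for f
    using generate_in_carrier[OF X] carrier_SymG by auto
  show ?thesis unfolding pgrp_def
  proof (intro conjI ballI)
    show "id \<in> generate SymG X" using generate.one[of SymG X] unfolding one_SymG .
  next
    fix f g assume f: "f \<in> generate SymG X" and g: "g \<in> generate SymG X"
    show "f \<circ> g \<in> generate SymG X"
      using generate.eng[OF f g] mult_SymG[OF b[OF f] b[OF g]] by simp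
  next
    fix f assume f: "f \<in> generate SymG X"
    show "finv f \<in> generate SymG X"
      using generate_m_inv_closed[OF X f] inv_SymG[OF b[OF f]] by simp
  qed (auto intro: b)
qed

lemma pgrp_conj: "pgrp K \<Longrightarrow> h \<in> K \<Longrightarrow> f \<in> K \<Longrightarrow> h \<circ> f \<circ> finv h \<in> K"
  by (meson pgrpD)

lemma pgrp_conj': "pgrp K \<Longrightarrow> h \<in> K \<Longrightarrow> h \<circ> f \<circ> finv h \<in> K \<Longrightarrow> bij h \<Longrightarrow> f \<in> K"
proof -
  assume K: "pgrp K" and h: "h \<in> K" and c: "h \<circ> f \<circ> finv h \<in> K" and bh: "bij h"
  have "finv h \<circ> (h \<circ> f \<circ> finv h) \<circ> h = f"
    using bh by (auto simp: fun_eq_iff bij_def surj_f_inv_f inv_f_f)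
  moreover have "finv h \<circ> (h \<circ> f \<circ> finv h) \<circ> h \<in> K"
    using K h c by (meson pgrpD)
  ultimately show ?thesis by simp
qed

lemma bij_betw_countable_inf:
  assumes "countable X" "countable Y" "infinite X" "infinite Y"
  shows "\<exists>f. bij_betw f X Y"
proof -
  have a: "bij_betw (from_nat_into X) UNIV X" and b: "bij_betw (from_nat_into Y) UNIV Y"
    using bij_betw_from_nat_into assms by blast+
  have "bij_betw (from_nat_into Y \<circ> inv_into UNIV (from_nat_into X)) X Y"
    using bij_betw_trans[OF bij_betw_inv_into[OF a] b] .
  thus ?thesis by blast
qed

lemma bij_glue:
  assumes "bij_betw f X Y" "bij_betw g (-X) (-Y)"
  shows "bij (\<lambda>z. if z \<in> X then f z else g z)"
proof -
  have "bij_betw (\<lambda>z. if z \<in> X then f z else g z) (X \<union> -X) (Y \<union> -Y)"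
    apply (rule bij_betw_combine)
      apply (rule bij_betw_cong[THEN iffD1, OF _ assms(1)]) apply simp
     apply (rule bij_betw_cong[THEN iffD1, OF _ assms(2)]) apply simp
    by auto
  thus ?thesis by simp
qed

lemma bij_extend:
  fixes f :: "'a \<Rightarrow> 'a"
  assumes "countable (UNIV::'a set)" "bij_betw f X Y" "infinite (-X)" "infinite (-Y)"
  shows "\<exists>h. bij h \<and> (\<forall>x\<in>X. h x = f x) \<and> h ` X = Y"
proof -
  have c11: "countable (-X)" by (rule countable_subset[OF _ assms(1)]) simp
  have c12: "countable (-Y)" by (rule countable_subset[OF _ assms(1)]) simp
  note c1 = c11 c12
  obtain g where g: "bij_betw g (-X) (-Y)"
    using bij_betw_countable_inf[OF c1 assms(3,4)] by blast
  let ?h = "\<lambda>z. if z \<in> X then f z else g z"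
  have "bij ?h" using bij_glue[OF assms(2) g] .
  moreover have "\<forall>x\<in>X. ?h x = f x" by simp
  moreover have "?h ` X = Y"
  proof -
    have "?h ` X = f ` X" by (rule image_cong) auto
    thus ?thesis using assms(2) by (simp add: bij_betw_def)
  qed
  ultimately show ?thesis by blast
qed

lemma bij_restrict_id:
  assumes "bij_betw f W W"
  shows "bij (\<lambda>z. if z \<in> W then f z else z)"
proof -
  have "bij (\<lambda>z. if z \<in> W then f z else id z)" using bij_glue[OF assms, of id] bij_betw_id by blast
  thus ?thesis unfolding id_def .
qed

definition SymOn :: "'a set \<Rightarrow> ('a \<Rightarrow> 'a) set" where
  "SymOn W = {f. bij f \<and> (\<forall>z. z \<notin> W \<longrightarrow> f z = z)}"

lemma SymOn_image: "f \<in> SymOn W \<Longrightarrow> f ` W = W"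
proof -
  assume f: "f \<in> SymOn W"
  hence b: "bij f" and fx: "\<And>z. z \<notin> W \<Longrightarrow> f z = z" by (auto simp: SymOn_def)
  have "f ` W \<subseteq> W"
  proof
    fix y assume "y \<in> f ` W" then obtain x where x: "x \<in> W" "y = f x" by auto
    show "y \<in> W" proof (rule ccontr)
      assume "y \<notin> W" hence "f y = y" using fx by auto
      hence "f y = f x" using x by simp
      hence "y = x" using bij_is_inj[OF b] by (rule injD[rotated])
      thus False using x \<open>y \<notin> W\<close> by simp
    qed
  qed
  moreover have "W \<subseteq> f ` W"
  proof
    fix y assume y: "y \<in> W"
    obtain x where x: "y = f x" using surjD[OF bij_is_surj[OF b]] by blast
    have "x \<in> W" using fx x y by (cases "x \<in> W") auto
    thus "y \<in> f ` W" using x by auto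
  qed
  ultimately show ?thesis by auto
qed

lemma SymOn_conj:
  assumes "f \<in> SymOn W" "bij h"
  shows "h \<circ> f \<circ> finv h \<in> SymOn (h ` W)"
proof -
  have "bij (h \<circ> f \<circ> finv h)" using assms by (auto simp: SymOn_def intro: bij_comp bij_imp_bij_inv)
  moreover have "(h \<circ> f \<circ> finv h) z = z" if "z \<notin> h ` W" for z
  proof -
    have hz: "h (finv h z) = z" using assms(2) by (simp add: bij_is_surj surj_f_inv_f)
    have "finv h z \<notin> W"
    proof
      assume "finv h z \<in> W" hence "h (finv h z) \<in> h ` W" by blast
      thus False using hz that by simp
    qed
    hence "f (finv h z) = finv h z" using assms(1) by (auto simp: SymOn_def)
    thus ?thesis using hz by simp
  qed
  ultimately show ?thesis by (auto simp: SymOn_def)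
qed

lemma SymOn_mono: "V \<subseteq> W \<Longrightarrow> SymOn V \<subseteq> SymOn W"
  by (auto simp: SymOn_def)


lemma split_infinite:
  assumes "countable W" "infinite W"
  shows "\<exists>W1 W2. W1 \<inter> W2 = {} \<and> W1 \<union> W2 = W \<and> infinite W1 \<and> infinite W2"
proof -
  let ?e = "from_nat_into W"
  have b: "bij_betw ?e UNIV W" using bij_betw_from_nat_into assms by blast
  have i: "inj ?e" using b by (simp add: bij_betw_def)
  let ?W1 = "range (\<lambda>n. ?e (2*n))" and ?W2 = "range (\<lambda>n. ?e (2*n+1))"
  have "?W1 \<inter> ?W2 = {}"
  proof (rule equals0I)
    fix z assume "z \<in> ?W1 \<inter> ?W2"
    then obtain m n where "?e (2*m) = ?e (2*n+1)" by auto
    hence "2*m = 2*n+1" using injD[OF i] by blast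
    thus False by presburger
  qed
  moreover have "?W1 \<union> ?W2 = W"
  proof
    show "?W1 \<union> ?W2 \<subseteq> W" using b by (auto simp: bij_betw_def)
  next
    show "W \<subseteq> ?W1 \<union> ?W2"
    proof
      fix z assume "z \<in> W"
      then obtain k where k: "z = ?e k" using b by (auto simp: bij_betw_def)
      show "z \<in> ?W1 \<union> ?W2"
      proof (cases "even k")
        case True then obtain n where "k = 2*n" by (auto elim: evenE)
        thus ?thesis using k by auto
      next
        case False then obtain n where "k = 2*n+1" by (auto elim: oddE)
        thus ?thesis using k by auto
      qed
    qed
  qed
  moreover have "infinite ?W1"
    by (rule range_inj_infinite) (auto intro!: injI dest: injD[OF i])
  moreover have "infinite ?W2"
    by (rule range_inj_infinite) (auto intro!: injI dest: injD[OF i])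
  ultimately show ?thesis by blast
qed

lemma move_set:
  fixes X Y :: "'a set"
  assumes "countable (UNIV::'a set)" "infinite X" "infinite Y" "infinite (-X)" "infinite (-Y)"
  shows "\<exists>h. bij h \<and> h ` X = Y"
proof -
  have cX: "countable X" by (rule countable_subset[OF _ assms(1)]) simp
  have cY: "countable Y" by (rule countable_subset[OF _ assms(1)]) simp
  obtain f where "bij_betw f X Y" using bij_betw_countable_inf[OF cX cY assms(2,3)] by blast
  thus ?thesis using bij_extend[OF assms(1) _ assms(4,5)] by blast
qed

lemma bij_image_inv:
  assumes "bij h" "h ` X = Y"
  shows "finv h ` Y = X"
  using assms by (metis bij_is_inj image_inv_f_f)

lemma inner_move:
  fixes W X T :: "'a set"
  assumes "countable W" "X \<subseteq> W" "infinite (W - X)" "T \<subseteq> W" "infinite T" "infinite (W - T)"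
  shows "\<exists>a. bij_betw a W W \<and> a ` X \<subseteq> T"
proof -
  have cX: "countable X" using countable_subset[OF assms(2,1)] .
  have cT: "countable T" using countable_subset[OF assms(4,1)] .
  obtain Y b where Y: "Y \<subseteq> T" "bij_betw b X Y" "infinite (W - Y)"
  proof (cases "finite X")
    case True
    obtain Y where Y: "Y \<subseteq> T" "finite Y" "card Y = card X"
      using infinite_arbitrarily_large[OF assms(5)] by blast
    obtain b where "bij_betw b X Y" using finite_same_card_bij[OF True Y(2) Y(3)[symmetric]] by blast
    moreover have "infinite (W - Y)"
    proof
      assume "finite (W - Y)"
      moreover have "W - T \<subseteq> W - Y" using Y(1) by blast
      ultimately show False using assms(6) finite_subset by blast
    qed
    ultimately show ?thesis using that Y(1) by blast
  next
    case False
    obtain b where "bij_betw b X T" using bij_betw_countable_inf[OF cX cT False assms(5)] by blast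
    thus ?thesis using that assms(6) by blast
  qed
  have cWX: "countable (W - X)" by (rule countable_subset[OF _ assms(1)]) blast
  have cWY: "countable (W - Y)" by (rule countable_subset[OF _ assms(1)]) blast
  obtain c where c: "bij_betw c (W - X) (W - Y)"
    using bij_betw_countable_inf[OF cWX cWY assms(3) Y(3)] by blast
  let ?a = "\<lambda>z. if z \<in> X then b z else c z"
  have "bij_betw ?a (X \<union> (W - X)) (Y \<union> (W - Y))"
    apply (rule bij_betw_combine)
      apply (rule bij_betw_cong[THEN iffD1, OF _ Y(2)]) apply simp
     apply (rule bij_betw_cong[THEN iffD1, OF _ c]) apply simp
    by blast
  moreover have "X \<union> (W - X) = W" using assms(2) by blast
  moreover have "Y \<union> (W - Y) = W" using Y(1) assms(4) by blast
  moreover have "?a ` X \<subseteq> T" using Y(1,2) by (auto simp: bij_betw_def)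
  ultimately have "bij_betw ?a W W \<and> ?a ` X \<subseteq> T" by simp
  thus ?thesis by blast
qed

lemma SymOn_conj_in:
  assumes K: "pgrp K" and h: "h \<in> K" and sub: "SymOn V \<subseteq> K" and r: "r \<in> SymOn M" and hM: "h ` M \<subseteq> V"
  shows "r \<in> K"
proof -
  have bh: "bij h" using pgrpD(1)[OF K h] .
  have "h \<circ> r \<circ> finv h \<in> SymOn (h ` M)" by (rule SymOn_conj[OF r bh])
  hence "h \<circ> r \<circ> finv h \<in> K" using SymOn_mono[OF hM] sub by blast
  thus ?thesis using pgrp_conj'[OF K h _ bh] by blast
qed


lemma invol_bij: "q \<circ> q = id \<Longrightarrow> bij q"
  by (rule o_bij)

lemma ramsey_decomp:
  fixes f :: "'a \<Rightarrow> 'a"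
  assumes cU: "countable (UNIV::'a set)" and bf: "bij f" and inf: "infinite {z. f z \<noteq> z}"
  shows "\<exists>p q M N. p \<in> SymOn M \<and> q \<in> SymOn N \<and> infinite (-M) \<and> infinite (-N) \<and> f = p \<circ> q"
proof -
  let ?Z = "{z. f z \<noteq> z}"
  define c :: "'a set \<Rightarrow> nat" where "c P = (if \<exists>x\<in>P. \<exists>y\<in>P. x \<noteq> y \<and> f x = y then 1 else 0)" for P
  have "\<forall>x\<in>?Z. \<forall>y\<in>?Z. x \<noteq> y \<longrightarrow> c {x, y} < 2" by (simp add: c_def)
  then obtain Y0 t where Y0: "Y0 \<subseteq> ?Z" "infinite Y0" "t < 2" and hom: "\<forall>x\<in>Y0. \<forall>y\<in>Y0. x\<noteq>y \<longrightarrow> c {x, y} = t"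
    using Ramsey2[OF inf, of c 2] by blast
  have ff: "\<And>z. f (finv f z) = z" using bf by (simp add: bij_is_surj surj_f_inv_f)
  have ff2: "\<And>z. finv f (f z) = z" using bf by (simp add: bij_is_inj inv_f_f)
  have t0: "t = 0"
  proof (rule ccontr)
    assume "t \<noteq> 0"
    hence t1: "t = 1" using Y0(3) by simp
    have "Y0 \<noteq> {}" using Y0(2) by auto
    then obtain a where a: "a \<in> Y0" by blast
    have "Y0 \<subseteq> {a, f a, finv f a}"
    proof
      fix y assume y: "y \<in> Y0"
      show "y \<in> {a, f a, finv f a}"
      proof (cases "y = a")
        case False
        have "c {a, y} = t" using hom a y False by simp
        hence "c {a, y} = 1" using t1 by simp
        hence "\<exists>x\<in>{a,y}. \<exists>y'\<in>{a,y}. x \<noteq> y' \<and> f x = y'" unfolding c_def by presburger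
        hence "f a = y \<or> f y = a" by auto
        moreover have "f y = a \<Longrightarrow> y = finv f a" using ff2[of y] by simp
        ultimately show ?thesis by blast
      qed simp
    qed
    hence "finite Y0" by (rule finite_subset) simp
    thus False using Y0(2) by simp
  qed
  have ind: "\<And>x y. x \<in> Y0 \<Longrightarrow> y \<in> Y0 \<Longrightarrow> f x \<noteq> y"
  proof -
    fix x y assume xy: "x \<in> Y0" "y \<in> Y0"
    show "f x \<noteq> y"
    proof (cases "x = y")
      case True thus ?thesis using xy Y0(1) by auto
    next
      case False
      hence "c {x, y} = 0" using hom xy t0 by blast
      thus ?thesis using False by (auto simp: c_def split: if_splits)
    qed
  qed
  have cY0: "countable Y0" by (rule countable_subset[OF _ cU]) simp
  obtain Y Y' where YY: "Y \<inter> Y' = {}" "Y \<union> Y' = Y0" "infinite Y" "infinite Y'"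
    using split_infinite[OF cY0 Y0(2)] by blast
  let ?FY = "finv f ` Y"
  have disj: "\<And>z. z \<in> ?FY \<Longrightarrow> z \<notin> Y0"
  proof -
    fix z assume "z \<in> ?FY"
    then obtain y where y: "y \<in> Y" "z = finv f y" by auto
    show "z \<notin> Y0"
    proof
      assume "z \<in> Y0"
      moreover have "f z = y" using y ff by simp
      ultimately show False using ind y(1) YY(2) by blast
    qed
  qed
  define q where "q z = (if z \<in> Y then finv f z else if z \<in> ?FY then f z else z)" for z
  have qq: "q \<circ> q = id"
  proof
    fix z
    show "(q \<circ> q) z = id z"
    proof (cases "z \<in> Y")
      case True
      hence "finv f z \<in> ?FY" by simp
      moreover have "finv f z \<notin> Y" using disj[OF \<open>finv f z \<in> ?FY\<close>] YY(2) by blast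
      ultimately show ?thesis using True by (simp add: q_def ff)
    next
      case False
      show ?thesis
      proof (cases "z \<in> ?FY")
        case True
        then obtain y where y: "y \<in> Y" "z = finv f y" by auto
        hence "f z = y" using ff by simp
        thus ?thesis using False True y by (simp add: q_def ff2)
      next
        case False2: False
        thus ?thesis using False by (simp add: q_def)
      qed
    qed
  qed
  have bq: "bij q" by (rule invol_bij[OF qq])
  have "\<forall>z. z \<notin> Y \<union> ?FY \<longrightarrow> q z = z" by (simp add: q_def)
  hence qS: "q \<in> SymOn (Y \<union> ?FY)" using bq by (simp add: SymOn_def)
  have qinf: "infinite (- (Y \<union> ?FY))"
  proof -
    have "Y' \<subseteq> - (Y \<union> ?FY)"
    proof
      fix z assume z: "z \<in> Y'"
      hence "z \<notin> Y" using YY(1) by blast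
      moreover have "z \<in> Y0" using z YY(2) by blast
      hence "z \<notin> ?FY" using disj by blast
      ultimately show "z \<in> - (Y \<union> ?FY)" by simp
    qed
    thus ?thesis using YY(4) finite_subset by blast
  qed
  let ?p = "f \<circ> q"
  have bp: "bij ?p" using bq bf by (rule bij_comp)
  have "\<forall>z. z \<notin> -Y \<longrightarrow> ?p z = z" by (simp add: q_def ff)
  hence pS: "?p \<in> SymOn (-Y)" using bp by (simp add: SymOn_def)
  have pinf: "infinite (- (- Y))" using YY(3) by simp
  have "f = ?p \<circ> q" using qq by (simp add: comp_assoc)
  thus ?thesis using qS pS qinf pinf by blast
qed


lemma moiety_gen:
  fixes S :: "'a set"
  assumes cU: "countable (UNIV::'a set)" and i1: "infinite S" and i2: "infinite (-S)"
  shows "\<exists>U0. finite U0 \<and> U0 \<subseteq> {f. bij f} \<and>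
           (\<forall>K. pgrp K \<longrightarrow> U0 \<subseteq> K \<longrightarrow> SymOn S \<subseteq> K \<longrightarrow> (\<forall>f. bij f \<longrightarrow> f \<in> K))"
proof -
  have cS: "countable S" by (rule countable_subset[OF _ cU]) simp
  have cS': "countable (-S)" by (rule countable_subset[OF _ cU]) simp
  obtain S1 S2 where SS: "S1 \<inter> S2 = {}" "S1 \<union> S2 = S" "infinite S1" "infinite S2"
    using split_infinite[OF cS i1] by blast
  obtain T T' where TT: "T \<inter> T' = {}" "T \<union> T' = -S" "infinite T" "infinite T'"
    using split_infinite[OF cS' i2] by blast
  have nS1: "infinite (-S1)"
  proof -
    have "S2 \<subseteq> -S1" using SS(1) by blast
    thus ?thesis using SS(4) finite_subset by blast
  qed
  have i1': "infinite (- (- S))" using i1 by simp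
  obtain t1 where t1: "bij t1" "t1 ` S1 = -S"
    using move_set[OF cU SS(3) i2 nS1 i1'] by blast
  obtain t2 where t2: "bij t2" "t2 ` S = -S"
    using move_set[OF cU i1 i2 i2 i1'] by blast
  have iST: "infinite (S \<union> T')" using i1 by simp
  have cST: "- (S \<union> T') = T" using TT(1,2) by blast
  have iST': "infinite (- (S \<union> T'))" using cST TT(3) by simp
  obtain u where u: "bij u" "u ` (S \<union> T') = S"
    using move_set[OF cU iST i1 iST' i2] by blast
  let ?U0 = "{t1, t2, u}"
  have "\<forall>K. pgrp K \<longrightarrow> ?U0 \<subseteq> K \<longrightarrow> SymOn S \<subseteq> K \<longrightarrow> (\<forall>f. bij f \<longrightarrow> f \<in> K)"
  proof (intro allI impI)
    fix K and f :: "'a \<Rightarrow> 'a" assume K: "pgrp K" and UK: "?U0 \<subseteq> K" and SK: "SymOn S \<subseteq> K" and bf: "bij f"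
    have t1K: "t1 \<in> K" using UK by simp
    have t2K: "t2 \<in> K" using UK by simp
    have uK: "u \<in> K" using UK by simp
    have it1K: "finv t1 \<in> K" using pgrpD(4)[OF K t1K] .
    have s1: "SymOn (-S) \<subseteq> K"
    proof
      fix r assume r: "r \<in> SymOn (-S)"
      have "finv t1 ` (-S) = S1" using bij_image_inv[OF t1] .
      hence "finv t1 ` (-S) \<subseteq> S" using SS(2) by blast
      thus "r \<in> K" by (rule SymOn_conj_in[OF K it1K SK r])
    qed
    have step2: "\<exists>h\<in>K. h ` M \<subseteq> S" if iM: "infinite (-S - M)" for M
    proof -
      have "M \<inter> -S \<subseteq> -S" by blast
      moreover have "infinite (-S - M \<inter> -S)"
      proof -
        have "-S - M \<inter> -S = -S - M" by blast
        thus ?thesis using iM by simp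
      qed
      moreover have "T' \<subseteq> -S" using TT(2) by blast
      moreover have "-S - T' = T" using TT(1,2) by blast
      ultimately obtain a where a: "bij_betw a (-S) (-S)" "a ` (M \<inter> -S) \<subseteq> T'"
        using inner_move[OF cS', of "M \<inter> -S" T'] TT(3,4) by auto
      let ?a = "\<lambda>z. if z \<in> -S then a z else z"
      have "bij ?a" using bij_restrict_id[OF a(1)] .
      hence "?a \<in> SymOn (-S)" by (simp add: SymOn_def)
      hence aK: "?a \<in> K" using s1 by blast
      have hK: "u \<circ> ?a \<in> K" using pgrpD(3)[OF K uK aK] .
      have "(u \<circ> ?a) ` M \<subseteq> S"
      proof
        fix y assume "y \<in> (u \<circ> ?a) ` M"
        then obtain z where z: "z \<in> M" "y = u (?a z)" by auto
        have "?a z \<in> S \<union> T'"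
        proof (cases "z \<in> S")
          case True thus ?thesis by simp
        next
          case False
          hence "a z \<in> T'" using a(2) z(1) by blast
          thus ?thesis using False by simp
        qed
        hence "u (?a z) \<in> u ` (S \<union> T')" by blast
        thus "y \<in> S" using u(2) z(2) by simp
      qed
      thus ?thesis using hK by blast
    qed
    have step3: "\<exists>h\<in>K. h ` M \<subseteq> S" if iM: "infinite (-M)" for M
    proof (cases "infinite (-S - M)")
      case True thus ?thesis using step2 by blast
    next
      case False
      have "-M = (S - M) \<union> (-S - M)" by blast
      hence iSM: "infinite (S - M)" using iM False by auto
      let ?M2 = "t2 ` M"
      have inj2: "inj t2" using t2(1) by (simp add: bij_is_inj)
      have "-S - ?M2 = t2 ` (S - M)" using t2(2) inj2 by (simp add: image_set_diff)
      hence "infinite (-S - ?M2)" using iSM inj2 by (simp add: finite_image_iff inj_on_subset)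
      then obtain h2 where h2: "h2 \<in> K" "h2 ` ?M2 \<subseteq> S" using step2 by blast
      have "h2 \<circ> t2 \<in> K" using pgrpD(3)[OF K h2(1) t2K] .
      moreover have "(h2 \<circ> t2) ` M \<subseteq> S" using h2(2) by (simp add: image_image)
      ultimately show ?thesis by blast
    qed
    have step4: "r \<in> K" if r: "r \<in> SymOn M" and iM: "infinite (-M)" for r M
    proof -
      obtain h where h: "h \<in> K" "h ` M \<subseteq> S" using step3[OF iM] by blast
      show ?thesis using SymOn_conj_in[OF K h(1) SK r h(2)] .
    qed
    show "f \<in> K"
    proof (cases "infinite (- {z. f z \<noteq> z})")
      case True
      have "f \<in> SymOn {z. f z \<noteq> z}" using bf by (simp add: SymOn_def)
      thus ?thesis using step4 True by simp
    next
      case False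
      have "infinite (UNIV::'a set)" using i1 by (rule infinite_super[rotated]) simp
      moreover have "UNIV = {z. f z \<noteq> z} \<union> - {z. f z \<noteq> z}" by blast
      ultimately have iU: "infinite ({z. f z \<noteq> z} \<union> - {z. f z \<noteq> z})" by simp
      have "infinite {z. f z \<noteq> z}"
      proof
        assume "finite {z. f z \<noteq> z}"
        moreover have "finite (- {z. f z \<noteq> z})" using False by simp
        ultimately have "finite ({z. f z \<noteq> z} \<union> - {z. f z \<noteq> z})" by (rule finite_UnI)
        thus False using iU by contradiction
      qed
      from ramsey_decomp[OF cU bf this] obtain p q M N where
        pq: "p \<in> SymOn M" "q \<in> SymOn N" "infinite (-M)" "infinite (-N)" "f = p \<circ> q"
        by blast
      have pK: "p \<in> K" using step4[OF pq(1) pq(3)] .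
      have qK: "q \<in> K" using step4[OF pq(2) pq(4)] .
      show ?thesis unfolding pq(5) using pgrpD(3)[OF K pK qK] .
    qed
  qed
  moreover have "?U0 \<subseteq> {f. bij f}" using t1(1) t2(1) u(1) by simp
  moreover have "finite ?U0" by simp
  ultimately show ?thesis by blast
qed


definition cutp :: "(nat \<Rightarrow> nat) \<Rightarrow> nat \<Rightarrow> bool" where
  "cutp l c \<longleftrightarrow> l ` {..<c} = {..<c}"

definition BP :: "(nat \<Rightarrow> nat) \<Rightarrow> bool" where
  "BP l \<longleftrightarrow> bij l \<and> (\<forall>N. \<exists>c\<ge>N. cutp l c)"

lemma chain_bij:
  fixes X Y :: "nat \<Rightarrow> nat set"
  assumes mX: "\<And>k. X k \<subseteq> X (Suc k)" and mY: "\<And>k. Y k \<subseteq> Y (Suc k)"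
    and fX: "\<And>k. finite (X k)" and fY: "\<And>k. finite (Y k)"
    and cXY: "\<And>k. card (X k) = card (Y k)"
    and uX: "\<And>n. \<exists>k. n \<in> X k" and uY: "\<And>n. \<exists>k. n \<in> Y k"
  shows "\<exists>b. bij b \<and> (\<forall>k. b ` X k = Y k)"
proof -
  define LX where "LX k = (case k of 0 \<Rightarrow> X 0 | Suc j \<Rightarrow> X (Suc j) - X j)" for k
  define LY where "LY k = (case k of 0 \<Rightarrow> Y 0 | Suc j \<Rightarrow> Y (Suc j) - Y j)" for k
  have cL: "card (LX k) = card (LY k)" for k
  proof (cases k)
    case 0 thus ?thesis using cXY by (simp add: LX_def LY_def)
  next
    case (Suc j)
    have "card (LX k) = card (X (Suc j)) - card (X j)"
      using Suc mX fX by (simp add: LX_def card_Diff_subset)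
    moreover have "card (LY k) = card (Y (Suc j)) - card (Y j)"
      using Suc mY fY by (simp add: LY_def card_Diff_subset)
    ultimately show ?thesis using cXY by simp
  qed
  have fLX: "finite (LX k)" for k using fX by (cases k) (auto simp: LX_def)
  have fLY: "finite (LY k)" for k using fY by (cases k) (auto simp: LY_def)
  have "\<exists>b. bij_betw b (LX k) (LY k)" for k
    using finite_same_card_bij[OF fLX fLY cL] .
  then obtain bl where bl: "\<And>k. bij_betw (bl k) (LX k) (LY k)" by metis
  define lay where "lay n = (LEAST k. n \<in> X k)" for n
  have monoX: "j \<le> k \<Longrightarrow> X j \<subseteq> X k" for j k using lift_Suc_mono_le[of X, OF mX] by blast
  have monoY: "j \<le> k \<Longrightarrow> Y j \<subseteq> Y k" for j k using lift_Suc_mono_le[of Y, OF mY] by blast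
  have layI: "lay n = k" if "n \<in> LX k" for n k
  proof (cases k)
    case 0
    hence "n \<in> X 0" using that by (simp add: LX_def)
    thus ?thesis unfolding lay_def using 0 by (metis Least_eq_0)
  next
    case (Suc j)
    hence n1: "n \<in> X (Suc j)" and n2: "n \<notin> X j" using that by (auto simp: LX_def)
    have h: "n \<notin> X i" if "i < Suc j" for i using monoX[of i j] that n2 by auto
    have "(LEAST k. n \<in> X k) = Suc j"
    proof (rule Least_equality)
      show "n \<in> X (Suc j)" by (rule n1)
      fix y assume "n \<in> X y" thus "Suc j \<le> y" using h by (meson not_le)
    qed
    thus ?thesis using Suc by (simp add: lay_def)
  qed
  define b where "b n = bl (lay n) n" for n
  have bL: "bij_betw b (LX k) (LY k)" for k
    using bl[of k] by (rule bij_betw_cong[THEN iffD2, rotated]) (simp add: b_def layI)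
  have bX: "bij_betw b (X k) (Y k)" for k
  proof (induction k)
    case 0 thus ?case using bL[of 0] by (simp add: LX_def LY_def)
  next
    case (Suc k)
    have "bij_betw b (X k \<union> LX (Suc k)) (Y k \<union> LY (Suc k))"
      by (rule bij_betw_combine[OF Suc bL]) (auto simp: LY_def)
    moreover have "X k \<union> LX (Suc k) = X (Suc k)" using mX by (auto simp: LX_def)
    moreover have "Y k \<union> LY (Suc k) = Y (Suc k)" using mY by (auto simp: LY_def)
    ultimately show ?case by simp
  qed
  have "inj b"
  proof (rule injI)
    fix x y assume e: "b x = b y"
    obtain i where i: "x \<in> X i" using uX by blast
    obtain j where j: "y \<in> X j" using uX by blast
    have "x \<in> X (max i j)" using monoX[of i "max i j"] i by auto
    moreover have "y \<in> X (max i j)" using monoX[of j "max i j"] j by auto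
    ultimately show "x = y" using bX[of "max i j"] e by (auto simp: bij_betw_def dest: inj_onD)
  qed
  moreover have "surj b"
  proof -
    have "y \<in> range b" for y
    proof -
      obtain k where "y \<in> Y k" using uY by blast
      hence "y \<in> b ` X k" using bX[of k] by (simp add: bij_betw_def)
      thus ?thesis by blast
    qed
    thus ?thesis by blast
  qed
  ultimately have "bij b" by (simp add: bij_def)
  moreover have "\<forall>k. b ` X k = Y k" using bX by (simp add: bij_betw_def)
  ultimately show ?thesis by blast
qed


lemma bf_decomp:
  fixes p :: "nat \<Rightarrow> nat"
  assumes bp: "bij p"
  shows "\<exists>b1 b2. BP b1 \<and> BP b2 \<and> p = b1 \<circ> b2"
proof -
  let ?q = "finv p"
  have pq: "\<And>z. p (?q z) = z" using bp by (simp add: bij_is_surj surj_f_inv_f)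
  have qp: "\<And>z. ?q (p z) = z" using bp by (simp add: bij_is_inj inv_f_f)
  have injq: "inj ?q" using bp by (simp add: bij_imp_bij_inv bij_is_inj)
  define r where "r = rec_nat 0 (\<lambda>k rk. Suc (rk + (\<Sum>i<rk. p i + ?q i)))"
  have r0: "r 0 = 0" by (simp add: r_def)
  have rS: "r (Suc k) = Suc (r k + (\<Sum>i<r k. p i + ?q i))" for k by (simp add: r_def)
  have rlt: "r k < r (Suc k)" for k using rS by simp
  have rmono: "strict_mono r" using rlt by (simp add: strict_mono_Suc_iff)
  have rge: "k \<le> r k" for k using rmono by (rule strict_mono_imp_increasing)
  have pb: "p i < r (Suc k)" if "i < r k" for i k
  proof -
    have "p i \<le> (\<Sum>i<r k. p i + ?q i)"
      using that by (intro order_trans[OF _ member_le_sum[of i]]) auto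
    thus ?thesis using rS by simp
  qed
  have qb: "?q i < r (Suc k)" if "i < r k" for i k
  proof -
    have "?q i \<le> (\<Sum>i<r k. p i + ?q i)"
      using that by (intro order_trans[OF _ member_le_sum[of i]]) auto
    thus ?thesis using rS by simp
  qed
  define X where "X j = (if even j then {..<r (Suc j)} else ?q ` {..<r (Suc j)})" for j
  define Y where "Y j = {..<r (Suc j)}" for j
  have mX: "X k \<subseteq> X (Suc k)" for k
  proof (cases "even k")
    case True
    have "{..<r (Suc k)} \<subseteq> ?q ` {..<r (Suc (Suc k))}"
    proof
      fix i assume "i \<in> {..<r (Suc k)}"
      hence "p i < r (Suc (Suc k))" using pb by simp
      thus "i \<in> ?q ` {..<r (Suc (Suc k))}" using qp[of i] by (metis image_eqI lessThan_iff)
    qed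
    thus ?thesis using True by (simp add: X_def)
  next
    case False
    have "?q ` {..<r (Suc k)} \<subseteq> {..<r (Suc (Suc k))}" using qb by auto
    thus ?thesis using False by (simp add: X_def)
  qed
  have mY: "Y k \<subseteq> Y (Suc k)" for k using rlt[of "Suc k"] by (auto simp: Y_def)
  have fX: "finite (X k)" for k by (simp add: X_def)
  have fY: "finite (Y k)" for k by (simp add: Y_def)
  have cXY: "card (X k) = card (Y k)" for k
  proof -
    have "card (?q ` {..<r (Suc k)}) = r (Suc k)"
      using card_image[OF inj_on_subset[OF injq subset_UNIV]] by simp
    thus ?thesis by (simp add: X_def Y_def)
  qed
  have uY: "\<exists>k. n \<in> Y k" for n
  proof -
    have "n < r (Suc n)" using rge[of "Suc n"] by simp
    thus ?thesis by (auto simp: Y_def)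
  qed
  have uX: "\<exists>k. n \<in> X k" for n
  proof -
    have "n < r (Suc (2*n))" using rge[of "Suc (2*n)"] by simp
    thus ?thesis by (intro exI[of _ "2*n"]) (simp add: X_def)
  qed
  obtain b2 where b2: "bij b2" "\<And>k. b2 ` X k = Y k"
    using chain_bij[OF mX mY fX fY cXY uX uY] by blast
  have BP2: "BP b2"
    unfolding BP_def
  proof (intro conjI allI)
    show "bij b2" by (rule b2(1))
    fix N
    have "cutp b2 (r (Suc (2*N)))" using b2(2)[of "2*N"] by (simp add: cutp_def X_def Y_def)
    moreover have "N \<le> r (Suc (2*N))" using rge[of "Suc (2*N)"] by simp
    ultimately show "\<exists>c\<ge>N. cutp b2 c" by blast
  qed
  let ?b1 = "p \<circ> finv b2"
  have bb1: "bij ?b1" using b2(1) bp by (simp add: bij_comp bij_imp_bij_inv)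
  have BP1: "BP ?b1"
    unfolding BP_def
  proof (intro conjI allI)
    show "bij ?b1" by (rule bb1)
    fix N
    let ?c = "r (Suc (Suc (2*N)))"
    have "finv b2 ` {..<?c} = X (Suc (2*N))"
      using bij_image_inv[OF b2(1) b2(2)[of "Suc (2*N)"]] by (simp add: Y_def)
    hence e: "finv b2 ` {..<?c} = ?q ` {..<?c}" by (simp add: X_def)
    have "?b1 ` {..<?c} = p ` (finv b2 ` {..<?c})" by (simp add: image_comp)
    hence "?b1 ` {..<?c} = p ` ?q ` {..<?c}" using e by simp
    also have "\<dots> = {..<?c}" using pq by (simp add: image_image)
    finally have "cutp ?b1 ?c" by (simp add: cutp_def)
    moreover have "N \<le> ?c" using rge[of "Suc (Suc (2*N))"] by simp
    ultimately show "\<exists>c\<ge>N. cutp ?b1 c" by blast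
  qed
  have "p = ?b1 \<circ> b2"
  proof
    fix z show "p z = (?b1 \<circ> b2) z" using b2(1) by (simp add: bij_is_inj inv_f_f)
  qed
  thus ?thesis using BP1 BP2 by blast
qed


definition lcode :: "nat list \<Rightarrow> nat" where "lcode t = list_encode (rev t)"
definition node :: "nat \<Rightarrow> nat list" where "node n = rev (list_decode n)"

lemma node_lcode[simp]: "node (lcode t) = t" by (simp add: lcode_def node_def)
lemma lcode_node[simp]: "lcode (node n) = n" by (simp add: lcode_def node_def)
lemma lcode_inj: "lcode s = lcode t \<Longrightarrow> s = t" by (metis node_lcode)

lemma list_encode_append_le: "list_encode ys \<le> list_encode (xs @ ys)"
proof (induction xs)
  case (Cons x xs)
  have "list_encode (xs @ ys) \<le> prod_encode (x, list_encode (xs @ ys))" by (rule le_prod_encode_2)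
  thus ?case using Cons by simp
qed simp

lemma list_encode_append_less: "xs \<noteq> [] \<Longrightarrow> list_encode ys < list_encode (xs @ ys)"
proof (cases xs)
  case (Cons x xs')
  have "list_encode ys \<le> list_encode (xs' @ ys)" by (rule list_encode_append_le)
  also have "\<dots> \<le> prod_encode (x, list_encode (xs' @ ys))" by (rule le_prod_encode_2)
  finally show ?thesis using Cons by simp
qed simp

lemma lcode_take_less: "j < length t \<Longrightarrow> lcode (take j t) < lcode t"
proof -
  assume j: "j < length t"
  have "rev t = rev (drop j t) @ rev (take j t)" by (metis append_take_drop_id rev_append)
  moreover have "rev (drop j t) \<noteq> []" using j by simp
  ultimately show ?thesis unfolding lcode_def by (metis list_encode_append_less)
qed

definition tup :: "(nat list \<Rightarrow> 'a) \<Rightarrow> nat list \<Rightarrow> 'a list" where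
  "tup v t = map (\<lambda>j. v (take j t)) [1..<Suc (length t)]"

lemma tup_snoc: "tup v (t @ [k]) = tup v t @ [v (t @ [k])]"
proof -
  have "[1..<Suc (length (t @ [k]))] = [1..<Suc (length t)] @ [Suc (length t)]" by simp
  hence "tup v (t @ [k]) = map (\<lambda>j. v (take j (t @ [k]))) [1..<Suc (length t)] @ [v (t @ [k])]"
    by (simp add: tup_def)
  moreover have "map (\<lambda>j. v (take j (t @ [k]))) [1..<Suc (length t)] = tup v t"
    unfolding tup_def by (intro map_cong) auto
  ultimately show ?thesis by simp
qed

lemma tup_Nil[simp]: "tup v [] = []" by (simp add: tup_def)

context
  fixes D :: "nat \<Rightarrow> 'a list set"
  assumes A5: "\<And>i. D i \<noteq> {}"
    and A6: "\<And>i xs. xs \<in> D i \<Longrightarrow> length xs = i"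
    and A8: "\<And>i xs. xs \<in> D i \<Longrightarrow> infinite {b. xs @ [b] \<in> D (Suc i)}"
    and UI: "infinite (UNIV :: 'a set)"
begin

lemma D0: "[] \<in> D 0"
proof -
  obtain xs where "xs \<in> D 0" using A5[of 0] by blast
  thus ?thesis using A6 by fastforce
qed

definition parent_tuple :: "nat \<Rightarrow> 'a list \<Rightarrow> 'a list" where
  "parent_tuple n L = map (\<lambda>j. L ! lcode (take j (node n))) [1..<length (node n)]"

definition pick :: "nat \<Rightarrow> 'a list \<Rightarrow> 'a" where
  "pick n L = (if node n = [] then (SOME b. b \<notin> set L)
               else (SOME b. b \<notin> set L \<and> parent_tuple n L @ [b] \<in> D (length (node n))))"

primrec FF :: "nat \<Rightarrow> 'a list" where
  "FF 0 = []"
| "FF (Suc n) = FF n @ [pick n (FF n)]"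

definition vl :: "nat list \<Rightarrow> 'a" where "vl t = FF (Suc (lcode t)) ! lcode t"

lemma FF_len[simp]: "length (FF n) = n" by (induction n) auto

lemma FF_mono: "m \<le> n \<Longrightarrow> take m (FF n) = FF m"
proof (induction n)
  case (Suc n)
  show ?case
  proof (cases "m = Suc n")
    case False
    hence "m \<le> n" using Suc by simp
    thus ?thesis using Suc by (simp add: take_append)
  qed (simp add: take_all)
qed simp

lemma FF_nth: "m < n \<Longrightarrow> FF n ! m = FF (Suc m) ! m"
proof -
  assume "m < n"
  hence "take (Suc m) (FF n) = FF (Suc m)" by (intro FF_mono) simp
  hence "take (Suc m) (FF n) ! m = FF (Suc m) ! m" by simp
  thus ?thesis by simp
qed

lemma FF_last: "FF (Suc n) ! n = pick n (FF n)"
proof -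
  have "(FF n @ [pick n (FF n)]) ! length (FF n) = pick n (FF n)" by (rule nth_append_length)
  thus ?thesis unfolding FF_len FF.simps(2) .
qed

lemma FF_props: "distinct (FF n) \<and> (\<forall>m<n. tup vl (node m) \<in> D (length (node m)))"
proof (induction n)
  case 0 thus ?case by simp
next
  case (Suc n)
  let ?t = "node n"
  have IH1: "distinct (FF n)" using Suc by simp
  have IH2: "\<And>m. m < n \<Longrightarrow> tup vl (node m) \<in> D (length (node m))" using Suc by simp
  have vln: "vl ?t = pick n (FF n)" by (simp add: vl_def FF_last del: FF.simps)
  have fin: "finite (set (FF n))" by simp
  have goal: "pick n (FF n) \<notin> set (FF n) \<and> tup vl ?t \<in> D (length ?t)"
  proof (cases "?t = []")
    case True
    have "\<exists>b. b \<notin> set (FF n)" using UI fin by (metis ex_new_if_finite)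
    hence "pick n (FF n) \<notin> set (FF n)" using True unfolding pick_def by (metis (mono_tags, lifting) someI_ex)
    moreover have "tup vl ?t \<in> D (length ?t)" using True D0 by simp
    ultimately show ?thesis by simp
  next
    case False
    obtain t' k where tk: "?t = t' @ [k]" using False by (metis rev_exhaust)
    have pc: "lcode t' < n"
    proof -
      have "t' = take (length t') ?t" using tk by simp
      hence "lcode t' = lcode (take (length t') ?t)" by simp
      also have "\<dots> < lcode ?t" by (rule lcode_take_less) (simp add: tk)
      finally show ?thesis by simp
    qed
    have ptup: "parent_tuple n (FF n) = tup vl t'"
      unfolding parent_tuple_def tup_def
    proof (rule map_cong)
      show "[1..<length ?t] = [1..<Suc (length t')]" using tk by simp
      fix j assume j: "j \<in> set [1..<Suc (length t')]"
      hence "j \<le> length t'" by auto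
      hence tj: "take j ?t = take j t'" using tk by simp
      have "lcode (take j t') \<le> lcode t'"
      proof (cases "j < length t'")
        case True thus ?thesis using lcode_take_less[OF True] by simp
      next
        case False thus ?thesis by simp
      qed
      hence "lcode (take j t') < n" using pc by simp
      thus "FF n ! lcode (take j ?t) = vl (take j t')" using tj FF_nth by (simp add: vl_def)
    qed
    have "tup vl t' \<in> D (length t')" using IH2[OF pc] by simp
    hence inf: "infinite {b. tup vl t' @ [b] \<in> D (Suc (length t'))}" by (rule A8)
    hence "\<exists>b. b \<notin> set (FF n) \<and> tup vl t' @ [b] \<in> D (Suc (length t'))"
      using fin by (metis (no_types, lifting) ex_new_if_finite mem_Collect_eq finite_Diff2 Diff_iff infinite_super subsetI)
    hence ex: "\<exists>b. b \<notin> set (FF n) \<and> parent_tuple n (FF n) @ [b] \<in> D (length ?t)"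
      using ptup tk by simp
    have pk: "pick n (FF n) \<notin> set (FF n) \<and> parent_tuple n (FF n) @ [pick n (FF n)] \<in> D (length ?t)"
      using someI_ex[OF ex] False unfolding pick_def by simp
    have "tup vl ?t = tup vl t' @ [vl ?t]" using tk tup_snoc by simp
    hence "tup vl ?t = parent_tuple n (FF n) @ [pick n (FF n)]" using ptup vln by simp
    thus ?thesis using pk by simp
  qed
  have "distinct (FF (Suc n))" using IH1 goal by simp
  moreover have "\<forall>m<Suc n. tup vl (node m) \<in> D (length (node m))"
    using IH2 goal by (metis less_Suc_eq)
  ultimately show ?case by simp
qed

lemma vl_tup: "tup vl t \<in> D (length t)"
  using FF_props[of "Suc (lcode t)"] by (metis lessI node_lcode)

lemma vl_inj: "inj vl"
proof (rule injI)
  fix s t assume e: "vl s = vl t"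
  let ?N = "Suc (max (lcode s) (lcode t))"
  have d: "distinct (FF ?N)" using FF_props[of ?N] by (rule conjunct1)
  have "vl s = FF ?N ! lcode s" using FF_nth[of "lcode s" ?N] by (simp add: vl_def)
  moreover have "vl t = FF ?N ! lcode t" using FF_nth[of "lcode t" ?N] by (simp add: vl_def)
  ultimately have "FF ?N ! lcode s = FF ?N ! lcode t" using e by simp
  hence "lcode s = lcode t" using d by (simp add: nth_eq_iff_index_eq)
  thus "s = t" by (rule lcode_inj)
qed

end


definition nextcut :: "(nat \<Rightarrow> nat) \<Rightarrow> nat \<Rightarrow> nat" where
  "nextcut l c = (LEAST d. c < d \<and> cutp l d)"

definition wseq :: "(nat \<Rightarrow> nat) \<Rightarrow> nat \<Rightarrow> nat" where
  "wseq l i = (if cutp l i then Suc (list_encode (map l [i..<nextcut l i])) else 0)"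

lemma cutp0: "cutp l 0" by (simp add: cutp_def)

lemma nextcut_props:
  assumes "BP l"
  shows "c < nextcut l c" "cutp l (nextcut l c)" "\<And>j. c < j \<Longrightarrow> j < nextcut l c \<Longrightarrow> \<not> cutp l j"
proof -
  obtain d where d: "d \<ge> Suc c" "cutp l d" using assms unfolding BP_def by blast
  hence ex: "c < d \<and> cutp l d" by simp
  show "c < nextcut l c" "cutp l (nextcut l c)"
    using LeastI[of "\<lambda>d. c < d \<and> cutp l d", OF ex] by (simp_all add: nextcut_def)
  fix j assume "c < j" "j < nextcut l c"
  thus "\<not> cutp l j" unfolding nextcut_def using not_less_Least by blast
qed

lemma block_inv:
  assumes "bij l" "cutp l c" "cutp l d" "c \<le> d"
  shows "l ` {c..<d} = {c..<d}"
proof -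
  have e1: "{c..<d} = {..<d} - {..<c}" by auto
  have e2: "l ` ({..<d} - {..<c}) = l ` {..<d} - l ` {..<c}"
    by (rule image_set_diff[OF bij_is_inj[OF assms(1)]])
  have "l ` {c..<d} = l ` {..<d} - l ` {..<c}" unfolding e1 by (rule e2)
  also have "\<dots> = {..<d} - {..<c}" using assms(2,3) by (simp add: cutp_def)
  also have "\<dots> = {c..<d}" using e1 by simp
  finally show ?thesis .
qed

lemma core:
  assumes Bl: "BP l" and Bm: "BP m" and agree: "\<And>j. j \<le> i \<Longrightarrow> wseq l j = wseq m j"
  obtains c d where "c \<le> i" "i < d" "\<forall>j<d. wseq l j = wseq m j" "\<forall>j. c \<le> j \<and> j < d \<longrightarrow> l j = m j"
           "l ` {c..<d} = {c..<d}"
proof -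
  let ?C = "{c. c \<le> i \<and> cutp l c}"
  have fC: "finite ?C" by simp
  have neC: "0 \<in> ?C" by (simp add: cutp0)
  define c where "c = Max ?C"
  have cC: "c \<in> ?C" unfolding c_def using fC neC by (intro Max_in) auto
  have cmax: "\<And>c'. c' \<le> i \<Longrightarrow> cutp l c' \<Longrightarrow> c' \<le> c" unfolding c_def using fC by simp
  define d where "d = nextcut l c"
  have cd: "c < d" and cutd: "cutp l d" and nocut: "\<And>j. c < j \<Longrightarrow> j < d \<Longrightarrow> \<not> cutp l j"
    using nextcut_props[OF Bl, of c] by (simp_all add: d_def)
  have wl: "wseq l c = Suc (list_encode (map l [c..<d]))" using cC by (simp add: wseq_def d_def)
  have "wseq m c = wseq l c" using agree cC by simp
  hence cm: "cutp m c" and em: "Suc (list_encode (map m [c..<nextcut m c])) = Suc (list_encode (map l [c..<d]))"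
    using wl by (simp_all add: wseq_def split: if_splits)
  have mapeq: "map m [c..<nextcut m c] = map l [c..<d]" using em by (metis Suc_inject list_encode_inverse)
  have cd': "c < nextcut m c" using nextcut_props[OF Bm] by simp
  hence d'd: "nextcut m c = d" using arg_cong[OF mapeq, of length] cd by simp
  have lm: "\<forall>j. c \<le> j \<and> j < d \<longrightarrow> l j = m j"
  proof (intro allI impI)
    fix j assume j: "c \<le> j \<and> j < d"
    have "\<forall>x\<in>{c..<d}. m x = l x" using mapeq d'd by (simp add: map_eq_conv)
    thus "l j = m j" using j by simp
  qed
  have id: "i < d"
  proof (rule ccontr)
    assume "\<not> i < d" hence "d \<le> i" by simp
    hence "d \<le> c" using cmax cutd by blast
    thus False using cd by simp
  qed
  have agd: "\<forall>j<d. wseq l j = wseq m j"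
  proof (intro allI impI)
    fix j assume jd: "j < d"
    show "wseq l j = wseq m j"
    proof (cases "j \<le> i")
      case True thus ?thesis using agree by simp
    next
      case False
      hence cj: "c < j" using cC by simp
      have "\<not> cutp l j" using nocut cj jd by simp
      moreover have "\<not> cutp m j" using nextcut_props(3)[OF Bm cj] jd d'd by simp
      ultimately show ?thesis by (simp add: wseq_def)
    qed
  qed
  have bl: "bij l" using Bl by (simp add: BP_def)
  have "l ` {c..<d} = {c..<d}" using block_inv[OF bl _ cutd] cC cd by simp
  moreover have "c \<le> i" using cC by simp
  ultimately show ?thesis using that id agd lm by blast
qed


definition pre :: "(nat \<Rightarrow> nat) \<Rightarrow> nat \<Rightarrow> nat list" where
  "pre l n = map (wseq l) [0..<n]"

lemma pre_take: "j \<le> n \<Longrightarrow> take j (pre l n) = pre l j"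
  by (simp add: pre_def take_map)

lemma pre_eq:
  assumes "pre l (Suc i) = pre m (Suc j)"
  shows "i = j" "\<And>k. k \<le> i \<Longrightarrow> wseq l k = wseq m k"
proof -
  show ij: "i = j" using arg_cong[OF assms, of length] by (simp add: pre_def)
  fix k assume "k \<le> i"
  hence "pre l (Suc i) ! k = pre m (Suc i) ! k" using assms ij by simp
  thus "wseq l k = wseq m k" using \<open>k \<le> i\<close> by (simp add: pre_def del: upt_Suc)
qed

lemma pre_agree: "(\<And>k. k < n \<Longrightarrow> wseq l k = wseq m k) \<Longrightarrow> pre l n = pre m n"
  by (simp add: pre_def)

context
  fixes D :: "nat \<Rightarrow> 'a list set" and \<alpha> :: "nat \<Rightarrow> 'a" and G :: "('a \<Rightarrow> 'a) set"
  assumes A5: "\<And>i. D i \<noteq> {}"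
    and A6: "\<And>i xs. xs \<in> D i \<Longrightarrow> length xs = i"
    and A8: "\<And>i xs. xs \<in> D i \<Longrightarrow> infinite {b. xs @ [b] \<in> D (Suc i)}"
    and UI: "infinite (UNIV :: 'a set)"
    and A9: "\<And>\<beta>. (\<forall>i. map \<beta> [0..<i] \<in> D i) \<Longrightarrow> (\<exists>g\<in>G. \<forall>i. \<beta> i = g (\<alpha> i))"
begin

definition bv :: "(nat \<Rightarrow> nat) \<Rightarrow> nat \<Rightarrow> 'a" where
  "bv l i = vl D (pre l (Suc i))"

lemma bv_D: "map (bv l) [0..<n] \<in> D n"
proof -
  have "tup (vl D) (pre l n) \<in> D (length (pre l n))" by (rule vl_tup[of D, OF A5 A6 A8 UI])
  moreover have "length (pre l n) = n" by (simp add: pre_def)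
  moreover have "tup (vl D) (pre l n) = map (bv l) [0..<n]"
  proof -
    have "tup (vl D) (pre l n) = map (\<lambda>j. vl D (take j (pre l n))) [1..<Suc n]"
      by (simp add: tup_def pre_def)
    also have "\<dots> = map (\<lambda>j. vl D (pre l j)) [1..<Suc n]"
      by (intro map_cong) (auto simp: pre_take)
    also have "[1..<Suc n] = map Suc [0..<n]" by (simp add: map_Suc_upt)
    finally show ?thesis by (simp add: bv_def comp_def)
  qed
  ultimately show ?thesis by simp
qed

lemma vl_inj': "inj (vl D)" by (rule vl_inj[of D, OF A5 A6 A8 UI])

lemma bv_eq:
  assumes "BP l" "BP m" "bv l i = bv m j"
  shows "i = j \<and> bv l (l i) = bv m (m j)"
proof -
  have pe: "pre l (Suc i) = pre m (Suc j)" using assms(3) vl_inj' by (simp add: bv_def inj_eq)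
  have ij: "i = j" using pre_eq(1)[OF pe] .
  have ag: "\<And>k. k \<le> i \<Longrightarrow> wseq l k = wseq m k" using pre_eq(2)[OF pe] .
  obtain c d where cd: "c \<le> i" "i < d" "\<forall>j<d. wseq l j = wseq m j" "\<forall>j. c \<le> j \<and> j < d \<longrightarrow> l j = m j"
      "l ` {c..<d} = {c..<d}"
    by (rule core[OF assms(1,2) ag])
  have lim: "l i = m i" using cd by simp
  have "i \<in> {c..<d}" using cd(1,2) by simp
  hence "l i \<in> l ` {c..<d}" by (rule imageI)
  hence "l i \<in> {c..<d}" using cd(5) by simp
  hence "pre l (Suc (l i)) = pre m (Suc (l i))" using cd(3) by (intro pre_agree) simp
  thus ?thesis using ij lim by (simp add: bv_def)
qed

lemma bv_eq2:
  assumes "BP l" "BP m" "bv l (l i) = bv m (m j)"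
  shows "bv l i = bv m j"
proof -
  have pe: "pre l (Suc (l i)) = pre m (Suc (m j))" using assms(3) vl_inj' by (simp add: bv_def inj_eq)
  have x: "l i = m j" using pre_eq(1)[OF pe] .
  have ag: "\<And>k. k \<le> l i \<Longrightarrow> wseq l k = wseq m k" using pre_eq(2)[OF pe] .
  obtain c d where cd: "c \<le> l i" "l i < d" "\<forall>j<d. wseq l j = wseq m j" "\<forall>j. c \<le> j \<and> j < d \<longrightarrow> l j = m j"
      "l ` {c..<d} = {c..<d}"
    by (rule core[OF assms(1,2) ag])
  have il: "inj l" using assms(1) by (simp add: BP_def bij_is_inj)
  have im: "inj m" using assms(2) by (simp add: BP_def bij_is_inj)
  have li: "l i \<in> {c..<d}" using cd(1,2) by simp
  hence "l i \<in> l ` {c..<d}" using cd(5) by simp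
  then obtain i' where i': "i' \<in> {c..<d}" "l i = l i'" by blast
  hence ii: "i \<in> {c..<d}" using injD[OF il i'(2)] by simp
  have "m j \<in> {c..<d}" using li x by simp
  hence "m j \<in> l ` {c..<d}" using cd(5) by simp
  then obtain j' where j': "j' \<in> {c..<d}" "m j = l j'" by blast
  have "l j' = m j'" using cd(4) j'(1) by simp
  hence "m j = m j'" using j'(2) by simp
  hence "j = j'" by (rule injD[OF im])
  hence "l j = l i" using j' x cd(4) by simp
  hence "j = i" by (rule injD[OF il])
  have "pre l (Suc i) = pre m (Suc i)" using cd(3) ii by (intro pre_agree) simp
  thus ?thesis using \<open>j = i\<close> by (simp add: bv_def)
qed

definition VV :: "'a set" where "VV = {z. \<exists>l i. BP l \<and> z = bv l i}"

definition Nmap :: "'a \<Rightarrow> 'a" where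
  "Nmap z = (if z \<in> VV then (SOME y. \<exists>l i. BP l \<and> z = bv l i \<and> y = bv l (l i)) else z)"

lemma Nmap_bv: "BP l \<Longrightarrow> Nmap (bv l i) = bv l (l i)"
proof -
  assume Bl: "BP l"
  have inV: "bv l i \<in> VV" unfolding VV_def using Bl by blast
  have ex: "\<exists>y. \<exists>m j. BP m \<and> bv l i = bv m j \<and> y = bv m (m j)" using Bl by blast
  have N: "Nmap (bv l i) = (SOME y. \<exists>m j. BP m \<and> bv l i = bv m j \<and> y = bv m (m j))"
    using inV by (simp add: Nmap_def)
  have "\<exists>m j. BP m \<and> bv l i = bv m j \<and> (SOME y. \<exists>m j. BP m \<and> bv l i = bv m j \<and> y = bv m (m j)) = bv m (m j)"
    by (rule someI_ex[OF ex])
  then obtain m j where mj: "BP m" "bv l i = bv m j" "Nmap (bv l i) = bv m (m j)" using N by auto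
  have e: "bv l (l i) = bv m (m j)" using bv_eq[OF Bl mj(1) mj(2)] by (rule conjunct2)
  show ?thesis unfolding mj(3) e ..
qed

lemma VV_E: "z \<in> VV \<Longrightarrow> (\<And>l i. BP l \<Longrightarrow> z = bv l i \<Longrightarrow> P) \<Longrightarrow> P"
  unfolding VV_def by blast

lemma VV_I: "BP l \<Longrightarrow> bv l i \<in> VV"
  unfolding VV_def by blast

lemma Nmap_bij: "bij Nmap"
proof -
  have inj: "inj_on Nmap VV"
  proof (rule inj_onI)
    fix x y assume x: "x \<in> VV" and y: "y \<in> VV" and e: "Nmap x = Nmap y"
    obtain l i where li: "BP l" "x = bv l i" using x by (rule VV_E)
    obtain m j where mj: "BP m" "y = bv m j" using y by (rule VV_E)
    have "Nmap x = bv l (l i)" using li Nmap_bv by simp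
    moreover have "Nmap y = bv m (m j)" using mj Nmap_bv by simp
    ultimately have "bv l (l i) = bv m (m j)" using e by simp
    hence "bv l i = bv m j" by (rule bv_eq2[OF li(1) mj(1)])
    thus "x = y" using li(2) mj(2) by simp
  qed
  have sub: "Nmap ` VV \<subseteq> VV"
  proof
    fix y assume "y \<in> Nmap ` VV"
    then obtain x where x: "x \<in> VV" "y = Nmap x" by blast
    obtain l i where li: "BP l" "x = bv l i" using x(1) by (rule VV_E)
    have "y = bv l (l i)" using x(2) li Nmap_bv by simp
    thus "y \<in> VV" using VV_I[OF li(1)] by simp
  qed
  have sup: "VV \<subseteq> Nmap ` VV"
  proof
    fix y assume "y \<in> VV"
    then obtain l i where li: "BP l" "y = bv l i" by (rule VV_E)
    have bl: "bij l" using li(1) by (simp add: BP_def)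
    have li2: "l (finv l i) = i" using bl by (simp add: bij_is_surj surj_f_inv_f)
    have "Nmap (bv l (finv l i)) = bv l (l (finv l i))" by (rule Nmap_bv[OF li(1)])
    hence "y = Nmap (bv l (finv l i))" using li(2) li2 by simp
    moreover have "bv l (finv l i) \<in> VV" by (rule VV_I[OF li(1)])
    ultimately show "y \<in> Nmap ` VV" by (rule rev_image_eqI[rotated])
  qed
  have "bij_betw Nmap VV VV" unfolding bij_betw_def using inj sub sup by blast
  hence "bij (\<lambda>z. if z \<in> VV then Nmap z else z)" by (rule bij_restrict_id)
  moreover have "(\<lambda>z. if z \<in> VV then Nmap z else z) = Nmap"
  proof
    fix z show "(if z \<in> VV then Nmap z else z) = Nmap z" by (cases "z \<in> VV") (simp_all add: Nmap_def)
  qed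
  ultimately show ?thesis by simp
qed

lemma realize:
  assumes "BP l" and Gb: "\<And>g. g \<in> G \<Longrightarrow> bij g"
  shows "\<exists>g\<in>G. \<forall>i. (finv g \<circ> Nmap \<circ> g) (\<alpha> i) = \<alpha> (l i)"
proof -
  have "\<forall>i. map (bv l) [0..<i] \<in> D i" using bv_D by blast
  then obtain g where g: "g \<in> G" "\<forall>i. bv l i = g (\<alpha> i)" using A9 by blast
  have bg: "bij g" using Gb g(1) .
  have "(finv g \<circ> Nmap \<circ> g) (\<alpha> i) = \<alpha> (l i)" for i
  proof -
    have "Nmap (g (\<alpha> i)) = Nmap (bv l i)" using g(2) by simp
    also have "\<dots> = bv l (l i)" by (rule Nmap_bv[OF assms(1)])
    also have "\<dots> = g (\<alpha> (l i))" using g(2) by simp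
    finally have "Nmap (g (\<alpha> i)) = g (\<alpha> (l i))" .
    thus ?thesis using bg by (simp add: bij_is_inj inv_f_f)
  qed
  thus ?thesis using g(1) by blast
qed

end


definition LL :: "nat \<times> nat \<Rightarrow> nat" where
  "LL p = (case p of (n, m) \<Rightarrow> if n < m then m*m + n else n*n + n + m)"

lemma LL_bounds: "max n m * max n m \<le> LL (n,m) \<and> LL (n,m) < Suc (max n m) * Suc (max n m)"
  by (auto simp: LL_def max_def)

lemma LL_inj: "inj LL"
proof (rule injI)
  fix p q assume e: "LL p = LL q"
  obtain n m where p: "p = (n,m)" by (cases p)
  obtain n' m' where q: "q = (n',m')" by (cases q)
  let ?k = "max n m" and ?k' = "max n' m'"
  have b1: "?k * ?k \<le> LL (n,m)" "LL (n,m) < Suc ?k * Suc ?k" using LL_bounds by blast+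
  have b2: "?k' * ?k' \<le> LL (n',m')" "LL (n',m') < Suc ?k' * Suc ?k'" using LL_bounds by blast+
  have kk: "?k = ?k'"
  proof (rule ccontr)
    assume "?k \<noteq> ?k'"
    hence "?k < ?k' \<or> ?k' < ?k" by linarith
    thus False
    proof
      assume "?k < ?k'" hence "Suc ?k \<le> ?k'" unfolding Suc_le_eq .
      hence "Suc ?k * Suc ?k \<le> ?k' * ?k'" using mult_le_mono by blast
      thus False using b1 b2 e p q by simp
    next
      assume "?k' < ?k" hence "Suc ?k' \<le> ?k" unfolding Suc_le_eq .
      hence "Suc ?k' * Suc ?k' \<le> ?k * ?k" using mult_le_mono by blast
      thus False using b1 b2 e p q by simp
    qed
  qed
  have "(n,m) = (n',m')"
  proof (cases "n < m")
    case True
    show ?thesis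
    proof (cases "n' < m'")
      case True
      thus ?thesis using \<open>n < m\<close> kk e p q by (simp add: LL_def max_def split: if_splits)
    next
      case False
      thus ?thesis using \<open>n < m\<close> kk e p q by (simp add: LL_def max_def split: if_splits)
    qed
  next
    case False
    show ?thesis
    proof (cases "n' < m'")
      case True
      thus ?thesis using \<open>\<not> n < m\<close> kk e p q by (simp add: LL_def max_def split: if_splits)
    next
      case False
      thus ?thesis using \<open>\<not> n < m\<close> kk e p q by (simp add: LL_def max_def split: if_splits)
    qed
  qed
  thus "p = q" using p q by simp
qed

lemma LL_sq: "LL ` ({..<r} \<times> {..<r}) = {..<r*r}"
proof -
  have sub: "LL ` ({..<r} \<times> {..<r}) \<subseteq> {..<r*r}"
  proof
    fix x assume "x \<in> LL ` ({..<r} \<times> {..<r})"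
    then obtain n m where nm: "n < r" "m < r" "x = LL (n,m)" by auto
    have "max n m < r" using nm by simp
    hence "Suc (max n m) \<le> r" unfolding Suc_le_eq .
    hence "Suc (max n m) * Suc (max n m) \<le> r * r" using mult_le_mono by blast
    thus "x \<in> {..<r*r}" using LL_bounds[of n m] nm by simp
  qed
  have "card (LL ` ({..<r} \<times> {..<r})) = card ({..<r} \<times> {..<r})"
    by (rule card_image[OF inj_on_subset[OF LL_inj subset_UNIV]])
  also have "\<dots> = r * r" by (simp add: card_cartesian_product)
  finally have "card (LL ` ({..<r} \<times> {..<r})) = card {..<r*r}" by simp
  thus ?thesis using sub by (intro card_subset_eq) auto
qed

lemma LL_bij: "bij LL"
proof -
  have "surj LL"
  proof -
    have "x \<in> range LL" for x
    proof -
      have "x < Suc x * Suc x" by simp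
      hence "x \<in> LL ` ({..<Suc x} \<times> {..<Suc x})" using LL_sq[of "Suc x"] by simp
      thus ?thesis by blast
    qed
    thus ?thesis by blast
  qed
  thus ?thesis using LL_inj by (simp add: bij_def)
qed

definition Li :: "nat \<Rightarrow> nat \<times> nat" where "Li = finv LL"

lemma LL_Li[simp]: "LL (Li i) = i"
  unfolding Li_def using LL_bij by (simp add: bij_is_surj surj_f_inv_f)

lemma Li_LL[simp]: "Li (LL p) = p"
  unfolding Li_def using LL_bij by (simp add: bij_is_inj inv_f_f)


definition sg :: "nat \<Rightarrow> nat" where "sg n = (if even n then n+2 else if n = 1 then 0 else n - 2)"
definition sgi :: "nat \<Rightarrow> nat" where "sgi n = (if n = 0 then 1 else if even n then n - 2 else n + 2)"

lemma sg_sgi[simp]: "sg (sgi n) = n"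
  by (simp add: sg_def sgi_def) presburger

lemma sgi_sg[simp]: "sgi (sg n) = n"
  by (simp add: sg_def sgi_def) presburger

definition sidx :: "nat \<Rightarrow> nat" where "sidx i = LL (sg (fst (Li i)), snd (Li i))"
definition sidxi :: "nat \<Rightarrow> nat" where "sidxi i = LL (sgi (fst (Li i)), snd (Li i))"

lemma sidx_sidxi[simp]: "sidx (sidxi i) = i" by (simp add: sidx_def sidxi_def)
lemma sidxi_sidx[simp]: "sidxi (sidx i) = i" by (simp add: sidx_def sidxi_def)

definition lamb :: "(nat \<Rightarrow> nat) \<Rightarrow> nat \<Rightarrow> nat" where
  "lamb b i = LL (fst (Li i), if even (fst (Li i)) then b (snd (Li i)) else snd (Li i))"

definition idx0 :: "(nat \<Rightarrow> nat) \<Rightarrow> nat \<Rightarrow> nat" where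
  "idx0 b i = LL (fst (Li i), if fst (Li i) = 0 then b (snd (Li i)) else snd (Li i))"

lemma lamb_comp: "lamb b (lamb c i) = lamb (b \<circ> c) i"
  by (simp add: lamb_def)

lemma idx0_comp: "idx0 b (idx0 c i) = idx0 (b \<circ> c) i"
  by (simp add: idx0_def)

lemma lamb_id: "lamb id i = i"
  by (simp add: lamb_def)

lemma inv_pair:
  assumes "\<And>x. p (q x) = x" "\<And>x. q (p x) = x"
  shows "bij p" "finv p = q"
proof -
  show bp: "bij p" using assms by (metis bijI' )
  show "finv p = q"
  proof
    fix x show "finv p x = q x" using assms bp by (metis bij_is_inj inv_f_f)
  qed
qed

lemma lamb_inv:
  assumes "bij b"
  shows "bij (lamb b)" "finv (lamb b) = lamb (finv b)"
proof -
  have a1: "b (finv b x) = x" for x using assms by (simp add: bij_is_surj surj_f_inv_f)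
  have a2: "finv b (b x) = x" for x using assms by (simp add: bij_is_inj inv_f_f)
  have "lamb b (lamb (finv b) x) = x" for x by (simp add: lamb_def a1)
  moreover have "lamb (finv b) (lamb b x) = x" for x by (simp add: lamb_def a2)
  ultimately show "bij (lamb b)" "finv (lamb b) = lamb (finv b)" using inv_pair by blast+
qed

lemma idx0_bij: "bij b \<Longrightarrow> bij (idx0 b)"
proof -
  assume bb: "bij b"
  have a1: "b (finv b x) = x" for x using bb by (simp add: bij_is_surj surj_f_inv_f)
  have a2: "finv b (b x) = x" for x using bb by (simp add: bij_is_inj inv_f_f)
  have "idx0 b (idx0 (finv b) x) = x" for x
  proof -
    obtain n m where nm: "Li x = (n,m)" by (cases "Li x")
    have "LL (n,m) = x" using LL_Li[of x] nm by simp
    thus ?thesis using nm by (cases "n = 0") (simp_all add: idx0_def a1)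
  qed
  moreover have "idx0 (finv b) (idx0 b x) = x" for x
  proof -
    obtain n m where nm: "Li x = (n,m)" by (cases "Li x")
    have "LL (n,m) = x" using LL_Li[of x] nm by simp
    thus ?thesis using nm by (cases "n = 0") (simp_all add: idx0_def a2)
  qed
  ultimately show "bij (idx0 b)" using inv_pair by blast
qed

lemma sidx_bij: "bij sidx" "finv sidx = sidxi"
  using inv_pair[of sidx sidxi] by simp_all

lemma lamb_BP:
  assumes "BP b"
  shows "BP (lamb b)"
proof -
  have bb: "bij b" using assms by (simp add: BP_def)
  have "cutp (lamb b) (r*r)" if cr: "cutp b r" for r
  proof -
    let ?rho = "\<lambda>(n,m). (n, if even n then b m else m)"
    have lr: "lamb b (LL p) = LL (?rho p)" for p by (cases p) (simp add: lamb_def)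
    have br: "b ` {..<r} = {..<r}" using cr by (simp add: cutp_def)
    have bl: "b x < r" if "x < r" for x
    proof -
      have "b x \<in> b ` {..<r}" using that by simp
      thus ?thesis using br by simp
    qed
    have "?rho ` ({..<r} \<times> {..<r}) = {..<r} \<times> {..<r}"
    proof
      show "?rho ` ({..<r} \<times> {..<r}) \<subseteq> {..<r} \<times> {..<r}" using bl by auto
      show "{..<r} \<times> {..<r} \<subseteq> ?rho ` ({..<r} \<times> {..<r})"
      proof
        fix p assume p: "p \<in> {..<r} \<times> {..<r}"
        obtain n m where nm: "p = (n,m)" by (cases p)
        show "p \<in> ?rho ` ({..<r} \<times> {..<r})"
        proof (cases "even n")
          case True
          have "m \<in> b ` {..<r}" using br p nm by auto
          then obtain m' where m': "m' < r" "m = b m'" by auto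
          have pe: "p = ?rho (n, m')" using nm m' True by simp
          have "(n, m') \<in> {..<r} \<times> {..<r}" using m' p nm by auto
          thus ?thesis using pe by (rule rev_image_eqI)
        next
          case False
          have pe: "p = ?rho (n, m)" using nm False by simp
          have "(n, m) \<in> {..<r} \<times> {..<r}" using p nm by auto
          thus ?thesis using pe by (rule rev_image_eqI)
        qed
      qed
    qed
    hence rr: "LL ` ?rho ` ({..<r} \<times> {..<r}) = LL ` ({..<r} \<times> {..<r})" by (rule arg_cong)
    have "lamb b ` LL ` ({..<r} \<times> {..<r}) = LL ` ?rho ` ({..<r} \<times> {..<r})"
      unfolding image_image lr ..
    hence "lamb b ` LL ` ({..<r} \<times> {..<r}) = LL ` ({..<r} \<times> {..<r})" using rr by (rule trans)
    thus ?thesis using LL_sq by (simp add: cutp_def)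
  qed
  note cc = this
  have "\<exists>c\<ge>N. cutp (lamb b) c" for N
  proof -
    obtain r where r: "r \<ge> N" "cutp b r" using assms unfolding BP_def by blast
    have "r \<le> r * r" by (rule le_square)
    hence "N \<le> r * r" using r(1) by (rule le_trans[rotated])
    thus ?thesis using cc[OF r(2)] by blast
  qed
  hence "\<forall>N. \<exists>c\<ge>N. cutp (lamb b) c" by blast
  thus ?thesis using lamb_inv(1)[OF bb] by (simp add: BP_def)
qed

lemma swindle_idx:
  assumes "bij b"
  shows "lamb b (sidx (lamb (finv b) (sidxi i))) = idx0 b i"
proof -
  have a1: "b (finv b x) = x" for x using assms by (simp add: bij_is_surj surj_f_inv_f)
  obtain n m where nm: "Li i = (n, m)" by (cases "Li i")
  have "n = 0 \<or> (even n \<and> n \<noteq> 0) \<or> odd n" by auto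
  thus ?thesis
  proof (elim disjE)
    assume "n = 0" thus ?thesis using nm by (simp add: lamb_def sidx_def sidxi_def idx0_def sgi_def sg_def)
  next
    assume n: "even n \<and> n \<noteq> 0"
    hence "even (n - 2)" by simp
    moreover have "Suc (Suc (n - 2)) = n" using n by presburger
    ultimately show ?thesis using nm n by (simp add: lamb_def sidx_def sidxi_def idx0_def sgi_def sg_def a1)
  next
    assume n: "odd n"
    hence "odd (n + 2)" by simp
    thus ?thesis using nm n by (simp add: lamb_def sidx_def sidxi_def idx0_def sgi_def sg_def)
  qed
qed


definition lift :: "(nat \<Rightarrow> 'a) \<Rightarrow> (nat \<Rightarrow> nat) \<Rightarrow> 'a \<Rightarrow> 'a" where
  "lift a p z = (if z \<in> range a then a (p (finv a z)) else z)"

lemma lift_a: "inj a \<Longrightarrow> lift a p (a i) = a (p i)"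
  by (simp add: lift_def inv_f_f)

lemma lift_out: "z \<notin> range a \<Longrightarrow> lift a p z = z"
  by (simp add: lift_def)

lemma lift_comp: "inj a \<Longrightarrow> lift a p \<circ> lift a q = lift a (p \<circ> q)"
proof
  fix z assume ia: "inj a"
  show "(lift a p \<circ> lift a q) z = lift a (p \<circ> q) z"
  proof (cases "z \<in> range a")
    case True
    then obtain i where "z = a i" by blast
    thus ?thesis using ia by (simp add: lift_a)
  next
    case False thus ?thesis by (simp add: lift_out)
  qed
qed

lemma lift_inv:
  assumes ia: "inj a" and bp: "bij p"
  shows "bij (lift a p)" "finv (lift a p) = lift a (finv p)"
proof -
  have a1: "p (finv p x) = x" for x using bp by (simp add: bij_is_surj surj_f_inv_f)
  have a2: "finv p (p x) = x" for x using bp by (simp add: bij_is_inj inv_f_f)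
  have "lift a p (lift a (finv p) z) = z" for z
  proof (cases "z \<in> range a")
    case True
    then obtain i where "z = a i" by blast
    thus ?thesis using ia by (simp add: lift_a a1)
  next
    case False thus ?thesis by (simp add: lift_out)
  qed
  moreover have "lift a (finv p) (lift a p z) = z" for z
  proof (cases "z \<in> range a")
    case True
    then obtain i where "z = a i" by blast
    thus ?thesis using ia by (simp add: lift_a a2)
  next
    case False thus ?thesis by (simp add: lift_out)
  qed
  ultimately show "bij (lift a p)" "finv (lift a p) = lift a (finv p)" using inv_pair by blast+
qed

lemma conj_lift:
  assumes ia: "inj a" and bk: "bij k" and kl: "\<And>i. k (a i) = a (l i)" and bl: "bij l"
  shows "k \<circ> lift a p \<circ> finv k = lift a (l \<circ> p \<circ> finv l)"
proof
  fix z
  have l1: "l (finv l x) = x" for x using bl by (simp add: bij_is_surj surj_f_inv_f)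
  have k1: "k (finv k x) = x" for x using bk by (simp add: bij_is_surj surj_f_inv_f)
  have k2: "finv k (k x) = x" for x using bk by (simp add: bij_is_inj inv_f_f)
  show "(k \<circ> lift a p \<circ> finv k) z = lift a (l \<circ> p \<circ> finv l) z"
  proof (cases "z \<in> range a")
    case True
    then obtain i where zi: "z = a i" by blast
    have "k (a (finv l i)) = a i" using kl l1 by simp
    hence fk: "finv k (a i) = a (finv l i)" using k2 by metis
    show ?thesis using zi fk ia kl by (simp add: lift_a)
  next
    case False
    have "finv k z \<notin> range a"
    proof
      assume "finv k z \<in> range a"
      then obtain j where "finv k z = a j" by blast
      hence "z = a (l j)" using k1 kl by metis
      thus False using False by blast
    qed
    thus ?thesis using False k1 by (simp add: lift_out)
  qed
qed


lemma swindle_step: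
  assumes K: "pgrp K" and ia: "inj a" and bk: "bij k" and kl: "\<And>i. k (a i) = a (lamb b i)"
    and kK: "k \<in> K" and sK: "lift a sidx \<in> K" and bb: "bij b"
  shows "lift a (idx0 b) \<in> K"
proof -
  have bl: "bij (lamb b)" using lamb_inv(1)[OF bb] .
  have c: "k \<circ> lift a sidx \<circ> finv k = lift a (lamb b \<circ> sidx \<circ> finv (lamb b))"
    by (rule conj_lift[OF ia bk kl bl])
  have "k \<circ> lift a sidx \<circ> finv k \<in> K" using pgrp_conj[OF K kK sK] .
  moreover have "finv (lift a sidx) \<in> K" using pgrpD(4)[OF K sK] .
  ultimately have "(k \<circ> lift a sidx \<circ> finv k) \<circ> finv (lift a sidx) \<in> K" using pgrpD(3)[OF K] by blast
  moreover have "finv (lift a sidx) = lift a sidxi" using lift_inv(2)[OF ia sidx_bij(1)] sidx_bij(2) by simp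
  ultimately have m: "lift a (lamb b \<circ> sidx \<circ> finv (lamb b)) \<circ> lift a sidxi \<in> K" using c by simp
  have "lift a (lamb b \<circ> sidx \<circ> finv (lamb b)) \<circ> lift a sidxi = lift a (lamb b \<circ> sidx \<circ> finv (lamb b) \<circ> sidxi)"
    by (rule lift_comp[OF ia])
  also have "lamb b \<circ> sidx \<circ> finv (lamb b) \<circ> sidxi = idx0 b"
  proof
    fix i show "(lamb b \<circ> sidx \<circ> finv (lamb b) \<circ> sidxi) i = idx0 b i"
      using swindle_idx[OF bb, of i] lamb_inv(2)[OF bb] by simp
  qed
  finally have e: "lift a (lamb b \<circ> sidx \<circ> finv (lamb b)) \<circ> lift a sidxi = lift a (idx0 b)" .
  show ?thesis using m unfolding e .
qed

lemma SymOn_idx0: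
  assumes ia: "inj a" and f: "f \<in> SymOn (range (\<lambda>m. a (LL (0, m))))"
  shows "\<exists>p. bij p \<and> f = lift a (idx0 p)"
proof -
  let ?S = "range (\<lambda>m. a (LL (0, m)))"
  have bf: "bij f" and fo: "\<And>z. z \<notin> ?S \<Longrightarrow> f z = z" using f by (auto simp: SymOn_def)
  have fS: "f ` ?S = ?S" using SymOn_image[OF f] .
  have ex: "\<exists>m'. f (a (LL (0, m))) = a (LL (0, m'))" for m
  proof -
    have "f (a (LL (0, m))) \<in> f ` ?S" by blast
    thus ?thesis using fS by auto
  qed
  define p where "p m = (SOME m'. f (a (LL (0, m))) = a (LL (0, m')))" for m
  have pf: "f (a (LL (0, m))) = a (LL (0, p m))" for m unfolding p_def using someI_ex[OF ex] .
  have injf: "inj f" using bf by (simp add: bij_is_inj)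
  have injLL: "inj LL" by (rule LL_inj)
  have "inj p"
  proof (rule injI)
    fix x y assume "p x = p y"
    hence "f (a (LL (0, x))) = f (a (LL (0, y)))" using pf by simp
    hence "a (LL (0, x)) = a (LL (0, y))" using injf by (simp add: inj_eq)
    hence "LL (0, x) = LL (0, y)" using ia by (simp add: inj_eq)
    thus "x = y" using injLL by (simp add: inj_eq)
  qed
  moreover have "surj p"
  proof -
    have "y \<in> range p" for y
    proof -
      have "a (LL (0, y)) \<in> f ` ?S" using fS by blast
      then obtain x where "a (LL (0, y)) = f (a (LL (0, x)))" by blast
      hence "a (LL (0, y)) = a (LL (0, p x))" using pf by simp
      hence "LL (0, y) = LL (0, p x)" using ia by (simp add: inj_eq)
      hence "y = p x" using injLL by (simp add: inj_eq)
      thus ?thesis by blast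
    qed
    thus ?thesis by blast
  qed
  ultimately have bp: "bij p" by (simp add: bij_def)
  have "f = lift a (idx0 p)"
  proof
    fix z show "f z = lift a (idx0 p) z"
    proof (cases "z \<in> range a")
      case False
      hence "z \<notin> ?S" by blast
      thus ?thesis using False fo by (simp add: lift_out)
    next
      case True
      then obtain i where zi: "z = a i" by blast
      obtain n m where nm: "Li i = (n, m)" by (cases "Li i")
      have iL: "i = LL (n, m)" using LL_Li[of i] nm by simp
      show ?thesis
      proof (cases "n = 0")
        case True
        thus ?thesis using zi iL nm pf ia by (simp add: lift_a idx0_def)
      next
        case False
        have "z \<notin> ?S"
        proof
          assume "z \<in> ?S"
          then obtain m' where "z = a (LL (0, m'))" by blast
          hence "LL (n, m) = LL (0, m')" using zi iL ia by (simp add: inj_eq)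
          hence "(n, m) = (0, m')" using injLL by (simp add: inj_eq)
          thus False using False by simp
        qed
        hence "f z = z" by (rule fo)
        thus ?thesis using zi iL nm ia False by (simp add: lift_a idx0_def)
      qed
    qed
  qed
  thus ?thesis using bp by blast
qed


lemma main_comb:
  fixes G :: "('a \<Rightarrow> 'a) set" and \<alpha> :: "nat \<Rightarrow> 'a" and D :: "nat \<Rightarrow> 'a list set"
  assumes cU: "countable (UNIV::'a set)" and UI: "infinite (UNIV :: 'a set)"
    and Gb: "\<And>g. g \<in> G \<Longrightarrow> bij g" and ia: "inj \<alpha>"
    and A5: "\<And>i. D i \<noteq> {}"
    and A6: "\<And>i xs. xs \<in> D i \<Longrightarrow> length xs = i"
    and A8: "\<And>i xs. xs \<in> D i \<Longrightarrow> infinite {b. xs @ [b] \<in> D (Suc i)}"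
    and A9: "\<And>\<beta>. (\<forall>i. map \<beta> [0..<i] \<in> D i) \<Longrightarrow> (\<exists>g\<in>G. \<forall>i. \<beta> i = g (\<alpha> i))"
  shows "\<exists>U. finite U \<and> U \<subseteq> {f. bij f} \<and> (\<forall>K. pgrp K \<longrightarrow> G \<subseteq> K \<longrightarrow> U \<subseteq> K \<longrightarrow> (\<forall>f. bij f \<longrightarrow> f \<in> K))"
proof -
  let ?S = "range (\<lambda>m. \<alpha> (LL (0, m)))"
  have injS: "inj (\<lambda>m. \<alpha> (LL (0, m)))"
  proof (rule injI)
    fix x y assume "\<alpha> (LL (0, x)) = \<alpha> (LL (0, y))"
    hence "LL (0, x) = LL (0, y)" using ia by (simp add: inj_eq)
    thus "x = y" using LL_inj by (simp add: inj_eq)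
  qed
  have iS: "infinite ?S" using range_inj_infinite[OF injS] .
  have injS1: "inj (\<lambda>m. \<alpha> (LL (1, m)))"
  proof (rule injI)
    fix x y assume "\<alpha> (LL (1, x)) = \<alpha> (LL (1, y))"
    hence "LL (1, x) = LL (1, y)" using ia by (simp add: inj_eq)
    thus "x = y" using LL_inj by (simp add: inj_eq)
  qed
  have sub1: "range (\<lambda>m. \<alpha> (LL (1, m))) \<subseteq> - ?S"
  proof
    fix z assume "z \<in> range (\<lambda>m. \<alpha> (LL (1, m)))"
    then obtain m where m: "z = \<alpha> (LL (1, m))" by blast
    show "z \<in> - ?S"
    proof
      assume "z \<in> ?S"
      then obtain m' where "z = \<alpha> (LL (0, m'))" by blast
      hence "LL (1, m) = LL (0, m')" using m ia by (simp add: inj_eq)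
      hence "(1::nat, m) = (0, m')" using LL_inj by (simp add: inj_eq)
      thus False by simp
    qed
  qed
  have iS': "infinite (- ?S)" using range_inj_infinite[OF injS1] sub1 finite_subset by blast
  obtain U0 where U0: "finite U0" "U0 \<subseteq> {f. bij f}"
    "\<And>K. pgrp K \<Longrightarrow> U0 \<subseteq> K \<Longrightarrow> SymOn ?S \<subseteq> K \<Longrightarrow> (\<forall>f. bij f \<longrightarrow> f \<in> K)"
    using moiety_gen[OF cU iS iS'] by blast
  let ?N = "Nmap D"
  have bN: "bij ?N" by (rule Nmap_bij[of D, OF A5 A6 A8 UI A9])
  have bs: "bij (lift \<alpha> sidx)" by (rule lift_inv(1)[OF ia sidx_bij(1)])
  let ?U = "insert ?N (insert (lift \<alpha> sidx) U0)"
  have "\<forall>K. pgrp K \<longrightarrow> G \<subseteq> K \<longrightarrow> ?U \<subseteq> K \<longrightarrow> (\<forall>f. bij f \<longrightarrow> f \<in> K)"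
  proof (intro allI impI)
    fix K and f :: "'a \<Rightarrow> 'a" assume K: "pgrp K" and GK: "G \<subseteq> K" and UK: "?U \<subseteq> K" and bf: "bij f"
    have NK: "?N \<in> K" using UK by simp
    have sK: "lift \<alpha> sidx \<in> K" using UK by simp
    have U0K: "U0 \<subseteq> K" using UK by simp
    have step: "lift \<alpha> (idx0 b) \<in> K" if Bb: "BP b" for b
    proof -
      have bb: "bij b" using Bb by (simp add: BP_def)
      have Bl: "BP (lamb b)" by (rule lamb_BP[OF Bb])
      obtain g where g: "g \<in> G" "\<forall>i. (finv g \<circ> ?N \<circ> g) (\<alpha> i) = \<alpha> (lamb b i)"
        using realize[of D, OF A5 A6 A8 UI A9 Bl Gb] by blast
      have gK: "g \<in> K" using g(1) GK by blast
      have kK: "finv g \<circ> ?N \<circ> g \<in> K" using pgrpD(3,4)[OF K] gK NK by blast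
      have bk: "bij (finv g \<circ> ?N \<circ> g)" using pgrpD(1)[OF K kK] .
      show ?thesis by (rule swindle_step[OF K ia bk _ kK sK bb]) (use g(2) in simp)
    qed
    have all: "lift \<alpha> (idx0 p) \<in> K" if bp: "bij p" for p
    proof -
      obtain b1 b2 where bb: "BP b1" "BP b2" "p = b1 \<circ> b2" using bf_decomp[OF bp] by blast
      have "idx0 p = idx0 b1 \<circ> idx0 b2" using bb(3) by (auto simp: idx0_comp)
      hence "lift \<alpha> (idx0 p) = lift \<alpha> (idx0 b1) \<circ> lift \<alpha> (idx0 b2)" using lift_comp[OF ia] by simp
      moreover have "lift \<alpha> (idx0 b1) \<circ> lift \<alpha> (idx0 b2) \<in> K"
        using pgrpD(3)[OF K step[OF bb(1)] step[OF bb(2)]] .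
      ultimately show ?thesis by simp
    qed
    have "SymOn ?S \<subseteq> K"
    proof
      fix h assume "h \<in> SymOn ?S"
      then obtain p where "bij p" "h = lift \<alpha> (idx0 p)" using SymOn_idx0[OF ia] by blast
      thus "h \<in> K" using all by simp
    qed
    thus "f \<in> K" using U0(3)[OF K U0K] bf by blast
  qed
  moreover have "finite ?U" using U0(1) by simp
  moreover have "?U \<subseteq> {f. bij f}" using U0(2) bN bs by simp
  ultimately show ?thesis by blast
qed


theorem lemma5p2:
  fixes G :: "('a \<Rightarrow> 'a) set"
    and \<alpha> :: "nat \<Rightarrow> 'a"
    and D :: "nat \<Rightarrow> 'a list set"
  assumes "countable (UNIV :: 'a set)" and "infinite (UNIV :: 'a set)"
    and "subgroup G SymG"
    and "inj \<alpha>"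
    and "\<And>i. D i \<noteq> {}"
    and "\<And>i xs. xs \<in> D i \<Longrightarrow> length xs = i"
    and "\<And>i xs. xs \<in> D (Suc i) \<Longrightarrow> butlast xs \<in> D i"
    and "\<And>i xs. xs \<in> D i \<Longrightarrow> infinite {b. xs @ [b] \<in> D (Suc i)}"
    and "\<And>\<beta>. (\<forall>i. map \<beta> [0..<i] \<in> D i) \<Longrightarrow> (\<exists>g\<in>G. \<forall>i. \<beta> i = g (\<alpha> i))"
  shows "sym_approx G (carrier SymG)"
proof -
  have GS: "G \<subseteq> carrier SymG" using assms(3) by (rule subgroup.subset)
  hence Gb: "\<And>g. g \<in> G \<Longrightarrow> bij g" using carrier_SymG by auto
  have p1: "sym_preceq G (carrier SymG)"
    unfolding sym_preceq_def
  proof (intro exI[of _ "{}"] conjI)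
    show "G \<subseteq> generate SymG (carrier SymG \<union> {})"
      using GS generate.incl[of _ "carrier SymG" SymG] by auto
  qed auto
  obtain U where U: "finite U" "U \<subseteq> {f. bij f}"
    "\<And>K. pgrp K \<Longrightarrow> G \<subseteq> K \<Longrightarrow> U \<subseteq> K \<Longrightarrow> (\<forall>f. bij f \<longrightarrow> f \<in> K)"
    using main_comb[of G \<alpha> D, OF assms(1,2) Gb assms(4,5,6,8,9)] by blast
  let ?K = "generate SymG (G \<union> U)"
  have "G \<union> U \<subseteq> {f. bij f}" using Gb U(2) by auto
  hence K: "pgrp ?K" by (rule pgrp_generate)
  have GUK: "G \<union> U \<subseteq> ?K" using generate.incl[of _ "G \<union> U" SymG] by blast
  have "\<forall>f. bij f \<longrightarrow> f \<in> ?K" using U(3)[OF K] GUK by blast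
  hence "carrier SymG \<subseteq> ?K" using carrier_SymG by auto
  moreover have "U \<subseteq> carrier SymG" using U(2) carrier_SymG by auto
  ultimately have p2: "sym_preceq (carrier SymG) G"
    unfolding sym_preceq_def using U(1) by blast
  show ?thesis unfolding sym_approx_def using p1 p2 by blast
qed


end
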